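(* Assume the setting below with $\mu_+(1)\le1$ and suppose there is $\varepsilon\in(0,1]$ with $\kappa(s)=0$ for all $s\in(0,\varepsilon)$. Assume (A1), (A2), (A4). Then there is $\lambda_0>0$ such that for every $\lambda\in(0,\lambda_0)$ there is no cavitating equilibrium solution with $r(1)=\lambda$.
   Context: Setting: $n\ge2$; $\kappa$ continuous on $[0,\infty)$, $\mu_+(\lambda)=\int_0^\lambda s\max\{\kappa(s),0\}ds$; $f$ solves $f''+\kappa f=0$, $f(0)=0$, $f'(0)=1$. $\Phi(v_1,\dots,v_n)=\sum_i\phi(v_i)+h(v_1\cdots v_n)$, $\tau(\rho)=f(r(\rho))/f(\rho)$, $T(\rho)=\tau^{n-1}\big[\phi'(r')+h'(r'\tau^{n-1})\tau^{n-1}\big]$. An equilibrium solution with $r(1)=\lambda$ is $r\in C^1(0,1]$, twice differentiable on $(0,1)$, $r'>0$ on $(0,1]$, $r(0):=\lim_{\rho\to0^+}r(\rho)\ge0$, $r(1)=\lambda$, satisfying on $(0,1)$ $$f(\rho)\big[\phi''(r')+h''(r'\tau^{n-1})\tau^{2(n-1)}\big]r''=(n-1)\big[f'(r)\phi'(\tau)-f'(\rho)\phi'(r')\big]-(n-1)\big(f'(r)r'-f'(\rho)\tau\big)h''(r'\tau^{n-1})\,r'\tau^{2n-3};$$ it is cavitating if $r(0)>0$ and $\lim_{\rho\to0^+}T(\rho)=0$. (A1) $h:(0,\infty)\to\mathbb R$ is $C^2$ and strictly convex. (A2) $\lim_{v\to0^+}h(v)=\lim_{v\to\infty}h(v)/v=+\infty$.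 (A4) $\phi:(0,\infty)\to(0,\infty)$ is $C^2$ and convex. *)

theory Defs
  imports "HOL-Analysis.Analysis"
begin

definition strictly_convex_on :: "real set \<Rightarrow> (real \<Rightarrow> real) \<Rightarrow> bool" where
  "strictly_convex_on S g \<longleftrightarrow>
     (\<forall>x\<in>S. \<forall>y\<in>S. x \<noteq> y \<longrightarrow> (\<forall>t. 0 < t \<and> t < 1 \<longrightarrow>
        g ((1 - t) * x + t * y) < (1 - t) * g x + t * g y))"

definition mu_plus :: "(real \<Rightarrow> real) \<Rightarrow> real \<Rightarrow> real" where
  "mu_plus \<kappa> L = integral {0..L} (\<lambda>s. s * max (\<kappa> s) 0)"

definition tau :: "(real \<Rightarrow> real) \<Rightarrow> (real \<Rightarrow> real) \<Rightarrow> real \<Rightarrow> real" where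
  "tau f r \<rho> = f (r \<rho>) / f \<rho>"

definition T_fun :: "nat \<Rightarrow> (real \<Rightarrow> real) \<Rightarrow> (real \<Rightarrow> real) \<Rightarrow> (real \<Rightarrow> real)
    \<Rightarrow> (real \<Rightarrow> real) \<Rightarrow> (real \<Rightarrow> real) \<Rightarrow> real \<Rightarrow> real" where
  "T_fun n f \<phi>' h' r r' \<rho> =
     tau f r \<rho> ^ (n - 1) * (\<phi>' (r' \<rho>) + h' (r' \<rho> * tau f r \<rho> ^ (n - 1)) * tau f r \<rho> ^ (n - 1))"

definition equilibrium_solution ::
  "nat \<Rightarrow> (real \<Rightarrow> real) \<Rightarrow> (real \<Rightarrow> real) \<Rightarrow> (real \<Rightarrow> real) \<Rightarrow> (real \<Rightarrow> real)
   \<Rightarrow> (real \<Rightarrow> real) \<Rightarrow> (real \<Rightarrow> real) \<Rightarrow> real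
   \<Rightarrow> (real \<Rightarrow> real) \<Rightarrow> (real \<Rightarrow> real) \<Rightarrow> (real \<Rightarrow> real) \<Rightarrow> real \<Rightarrow> bool" where
  "equilibrium_solution n f f' \<phi>' \<phi>'' h' h'' L r r' r'' r0 \<longleftrightarrow>
     (\<forall>\<rho>\<in>{0<..1}. (r has_real_derivative r' \<rho>) (at \<rho> within {0<..1})) \<and>
     continuous_on {0<..1} r' \<and>
     (\<forall>\<rho>\<in>{0<..<1}. (r' has_real_derivative r'' \<rho>) (at \<rho>)) \<and>
     (\<forall>\<rho>\<in>{0<..1}. r' \<rho> > 0) \<and>
     (r \<longlongrightarrow> r0) (at_right 0) \<and> r0 \<ge> 0 \<and>
     r 1 = L \<and>
     (\<forall>\<rho>\<in>{0<..<1}.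
        f \<rho> * (\<phi>'' (r' \<rho>) + h'' (r' \<rho> * tau f r \<rho> ^ (n - 1)) * tau f r \<rho> ^ (2 * (n - 1))) * r'' \<rho>
        = real (n - 1) * (f' (r \<rho>) * \<phi>' (tau f r \<rho>) - f' \<rho> * \<phi>' (r' \<rho>))
          - real (n - 1) * (f' (r \<rho>) * r' \<rho> - f' \<rho> * tau f r \<rho>)
              * h'' (r' \<rho> * tau f r \<rho> ^ (n - 1)) * r' \<rho> * tau f r \<rho> ^ (2 * n - 3))"

definition cavitating ::
  "nat \<Rightarrow> (real \<Rightarrow> real) \<Rightarrow> (real \<Rightarrow> real) \<Rightarrow> (real \<Rightarrow> real)
   \<Rightarrow> (real \<Rightarrow> real) \<Rightarrow> (real \<Rightarrow> real) \<Rightarrow> real \<Rightarrow> bool" where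
  "cavitating n f \<phi>' h' r r' r0 \<longleftrightarrow>
     r0 > 0 \<and> (T_fun n f \<phi>' h' r r' \<longlongrightarrow> 0) (at_right 0)"

end

theory Submission
  imports Defs
begin


lemma H_alg:
  fixes \<rho> x \<tau> p x2 A B A2 H1 H2 N :: real
  assumes "\<rho> > 0" and ode: "\<rho>*(A2 + H2*(p*\<tau>)^2)*x2 = N*(B - A) - N*(x-\<tau>)*H2*x*(p^2*\<tau>)"
  shows "(A*x2 + N*(B*((x-\<tau>)/\<rho>)) + H1*(x2*(p*\<tau>) + x*(N*p*((x-\<tau>)/\<rho>))))
     - (x2 - (x-\<tau>)/\<rho>)*(A + H1*(p*\<tau>))
     - (x-\<tau>)*(A2*x2 + H2*(x2*(p*\<tau>) + x*(N*p*((x-\<tau>)/\<rho>)))*(p*\<tau>) + H1*(N*p*((x-\<tau>)/\<rho>)))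
     = (N+1)*(x-\<tau>)*(A + H1*(p*\<tau>))/\<rho>"
proof -
  have "(A*x2 + N*(B*((x-\<tau>)/\<rho>)) + H1*(x2*(p*\<tau>) + x*(N*p*((x-\<tau>)/\<rho>))))
     - (x2 - (x-\<tau>)/\<rho>)*(A + H1*(p*\<tau>))
     - (x-\<tau>)*(A2*x2 + H2*(x2*(p*\<tau>) + x*(N*p*((x-\<tau>)/\<rho>)))*(p*\<tau>) + H1*(N*p*((x-\<tau>)/\<rho>)))
     - (N+1)*(x-\<tau>)*(A + H1*(p*\<tau>))/\<rho>
     = -(x-\<tau>)*(\<rho>*(A2 + H2*(p*\<tau>)^2)*x2 - (N*(B - A) - N*(x-\<tau>)*H2*x*(p^2*\<tau>)))/\<rho>"
    using assms(1) by (simp add: field_simps power2_eq_square)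
  thus ?thesis using ode by simp
qed



lemma eq_alg:
  fixes \<rho> u N X R Wv Sv P1 F1 ha H1 a t Dv V \<tau>1 :: real
  assumes "\<rho> > 0" "R = t * \<rho>" "u * \<rho> * Dv = X * V"
  shows "(u*\<rho>*\<rho> * ((N+1)*(X - R/\<rho>)*Sv/\<rho>) + (N+1)*(u*\<rho>)*(Wv - (X - R/\<rho>)*Sv))
        - (((N+1)*F1 - (N+1)*\<tau>1*P1 + ha - a*H1) * ((N+1)*(u*\<rho>)) + ((N+1)*P1)*((u*\<rho>)*X + N*u*R) + H1*((N+1)*(X*V)))
       = (N+1)*(u*\<rho>)*(Wv - ((N+1)*F1 + P1*(X + N*t - (N+1)*\<tau>1) + ha + H1*(Dv - a)))"
proof -
  have "(N+1)*(X*V) = (N+1)*(u*\<rho>*Dv)" using assms(3) by simp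
  thus ?thesis using assms(1,2) by (simp add: field_simps) 
qed

lemma pow_n: "n \<ge> 1 \<Longrightarrow> (y::real)^n = y^(n-1) * y"
  by (cases n) (auto simp: power_Suc2)

lemma pow_m1: "n \<ge> 2 \<Longrightarrow> (y::real)^(n-1) = y^(n-2) * y"
  using pow_n[of "n-1" y] by (simp add: diff_diff_add numeral_2_eq_2)



lemma H_deriv:
  fixes n :: nat and r x x2 \<phi> \<phi>' \<phi>'' h h' h'' :: "real \<Rightarrow> real" and \<rho> :: real
  assumes n2: "n \<ge> 2" and rho: "\<rho> > 0"
  and dr: "(r has_real_derivative x \<rho>) (at \<rho>)"
  and dx: "(x has_real_derivative x2 \<rho>) (at \<rho>)"
  and xpos: "x \<rho> > 0" and rpos: "r \<rho> > 0"
  and ode: "\<rho>*(\<phi>''(x \<rho>) + h''(x \<rho>*(r \<rho>/\<rho>)^(n-1))*(r \<rho>/\<rho>)^(2*(n-1)))*x2 \<rho>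
     = real(n-1)*(\<phi>'(r \<rho>/\<rho>) - \<phi>'(x \<rho>))
       - real(n-1)*(x \<rho> - r \<rho>/\<rho>)*h''(x \<rho>*(r \<rho>/\<rho>)^(n-1))*x \<rho>*(r \<rho>/\<rho>)^(2*n-3)"
  and d\<phi>: "\<And>v. v > 0 \<Longrightarrow> (\<phi> has_real_derivative \<phi>' v) (at v)"
  and d\<phi>': "\<And>v. v > 0 \<Longrightarrow> (\<phi>' has_real_derivative \<phi>'' v) (at v)"
  and dh: "\<And>v. v > 0 \<Longrightarrow> (h has_real_derivative h' v) (at v)"
  and dh': "\<And>v. v > 0 \<Longrightarrow> (h' has_real_derivative h'' v) (at v)"
  shows "((\<lambda>\<rho>. \<phi> (x \<rho>) + real (n-1) * \<phi> (r \<rho>/\<rho>) + h (x \<rho> * (r \<rho>/\<rho>)^(n-1))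
            - (x \<rho> - r \<rho>/\<rho>) * (\<phi>' (x \<rho>) + h' (x \<rho> * (r \<rho>/\<rho>)^(n-1)) * (r \<rho>/\<rho>)^(n-1)))
         has_real_derivative
          real n * (x \<rho> - r \<rho>/\<rho>) * (\<phi>' (x \<rho>) + h' (x \<rho> * (r \<rho>/\<rho>)^(n-1)) * (r \<rho>/\<rho>)^(n-1)) / \<rho>) (at \<rho>)"
proof -
  define t where "t = r \<rho> / \<rho>"
  define p where "p = t^(n-2)"
  define N where "N = real (n-1)"
  have tpos: "t > 0" using rpos rho by (simp add: t_def)
  have e1: "t^(n-1) = p*t" unfolding p_def using n2
    by (metis Suc_diff_Suc Suc_1 less_le_trans lessI numeral_2_eq_2 power_Suc2 diff_Suc_1 Suc_le_lessD)
  have e2: "t^(2*(n-1)) = (p*t)^2" using e1 by (metis power_mult power2_eq_square mult.commute)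
  have e3: "t^(2*n-3) = p^2*t"
  proof -
    have "2*n-3 = Suc (2*(n-2))" using n2 by simp
    thus ?thesis unfolding p_def by (simp add: power_mult power2_eq_square mult.commute power_mult_distrib)
  qed
  have eN: "real n = N + 1" unfolding N_def using n2 by simp
  have dt: "((\<lambda>\<rho>. r \<rho>/\<rho>) has_real_derivative (x \<rho> - t)/\<rho>) (at \<rho>)"
    using DERIV_divide[OF dr DERIV_ident] rho by (simp add: t_def field_simps power2_eq_square)
  have dtp: "((\<lambda>\<rho>. (r \<rho>/\<rho>)^(n-1)) has_real_derivative N*p*((x \<rho> - t)/\<rho>)) (at \<rho>)"
  proof -
    have "n - 1 - Suc 0 = n - 2" by simp
    thus ?thesis using DERIV_power[OF dt, of "n-1"] unfolding N_def p_def t_def by (simp add: ac_simps)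
  qed
  have Dpos: "x \<rho> * t^(n-1) > 0" using xpos tpos by simp
  have dD: "((\<lambda>\<rho>. x \<rho> * (r \<rho>/\<rho>)^(n-1)) has_real_derivative x2 \<rho> * (p*t) + x \<rho> * (N*p*((x \<rho> - t)/\<rho>))) (at \<rho>)"
    using DERIV_mult'[OF dx dtp] e1 unfolding t_def by (simp add: algebra_simps)
  have dphix: "((\<lambda>\<rho>. \<phi> (x \<rho>)) has_real_derivative \<phi>'(x \<rho>) * x2 \<rho>) (at \<rho>)"
    using DERIV_chain2[OF d\<phi>[OF xpos] dx] .
  have dphi'x: "((\<lambda>\<rho>. \<phi>' (x \<rho>)) has_real_derivative \<phi>''(x \<rho>) * x2 \<rho>) (at \<rho>)"
    using DERIV_chain2[OF d\<phi>'[OF xpos] dx] .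
  have dphit: "((\<lambda>\<rho>. \<phi> (r \<rho>/\<rho>)) has_real_derivative \<phi>'(t) * ((x \<rho> - t)/\<rho>)) (at \<rho>)"
    using DERIV_chain2[OF d\<phi>[OF tpos[unfolded t_def]] dt] unfolding t_def .
  have dhD: "((\<lambda>\<rho>. h (x \<rho> * (r \<rho>/\<rho>)^(n-1))) has_real_derivative h'(x \<rho> * t^(n-1)) * (x2 \<rho> * (p*t) + x \<rho> * (N*p*((x \<rho> - t)/\<rho>)))) (at \<rho>)"
    using DERIV_chain2[OF dh[OF Dpos[unfolded t_def]] dD] unfolding t_def .
  have dh'D: "((\<lambda>\<rho>. h' (x \<rho> * (r \<rho>/\<rho>)^(n-1))) has_real_derivative h''(x \<rho> * t^(n-1)) * (x2 \<rho> * (p*t) + x \<rho> * (N*p*((x \<rho> - t)/\<rho>)))) (at \<rho>)"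
    using DERIV_chain2[OF dh'[OF Dpos[unfolded t_def]] dD] unfolding t_def .
  define A where "A = \<phi>'(x \<rho>)"
  define B where "B = \<phi>' t"
  define A2 where "A2 = \<phi>''(x \<rho>)"
  define H1 where "H1 = h'(x \<rho> * t^(n-1))"
  define H2 where "H2 = h''(x \<rho> * t^(n-1))"
  have dS: "((\<lambda>\<rho>. \<phi>' (x \<rho>) + h' (x \<rho> * (r \<rho>/\<rho>)^(n-1)) * (r \<rho>/\<rho>)^(n-1)) has_real_derivative
     A2*x2 \<rho> + H2*(x2 \<rho>*(p*t) + x \<rho>*(N*p*((x \<rho>-t)/\<rho>)))*(p*t) + H1*(N*p*((x \<rho>-t)/\<rho>))) (at \<rho>)"
    using DERIV_add[OF dphi'x DERIV_mult'[OF dh'D dtp]] e1 unfolding A2_def H1_def H2_def t_def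
    by (simp add: algebra_simps)
  have dW: "((\<lambda>\<rho>. \<phi> (x \<rho>) + real (n-1) * \<phi> (r \<rho>/\<rho>) + h (x \<rho> * (r \<rho>/\<rho>)^(n-1))) has_real_derivative
     A*x2 \<rho> + N*(B*((x \<rho>-t)/\<rho>)) + H1*(x2 \<rho>*(p*t) + x \<rho>*(N*p*((x \<rho>-t)/\<rho>)))) (at \<rho>)"
    using DERIV_add[OF DERIV_add[OF dphix DERIV_cmult[OF dphit, of N]] dhD]
    unfolding A_def B_def H1_def N_def by (simp add: algebra_simps)
  have dxt: "((\<lambda>\<rho>. x \<rho> - r \<rho>/\<rho>) has_real_derivative x2 \<rho> - (x \<rho> - t)/\<rho>) (at \<rho>)"
    using DERIV_diff[OF dx dt] .
  have dH: "((\<lambda>\<rho>. \<phi> (x \<rho>) + real (n-1) * \<phi> (r \<rho>/\<rho>) + h (x \<rho> * (r \<rho>/\<rho>)^(n-1))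
            - (x \<rho> - r \<rho>/\<rho>) * (\<phi>' (x \<rho>) + h' (x \<rho> * (r \<rho>/\<rho>)^(n-1)) * (r \<rho>/\<rho>)^(n-1)))
         has_real_derivative
     (A*x2 \<rho> + N*(B*((x \<rho>-t)/\<rho>)) + H1*(x2 \<rho>*(p*t) + x \<rho>*(N*p*((x \<rho>-t)/\<rho>))))
     - (x2 \<rho> - (x \<rho>-t)/\<rho>)*(A + H1*(p*t))
     - (x \<rho>-t)*(A2*x2 \<rho> + H2*(x2 \<rho>*(p*t) + x \<rho>*(N*p*((x \<rho>-t)/\<rho>)))*(p*t) + H1*(N*p*((x \<rho>-t)/\<rho>)))) (at \<rho>)"
    apply (rule DERIV_cong[OF DERIV_diff[OF dW DERIV_mult'[OF dxt dS]]])
    unfolding A_def H1_def using e1 by (simp add: t_def[symmetric] algebra_simps)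
  have ode': "\<rho>*(A2 + H2*(p*t)^2)*x2 \<rho> = N*(B - A) - N*(x \<rho>-t)*H2*x \<rho>*(p^2*t)"
    using ode unfolding A_def B_def A2_def H2_def N_def t_def[symmetric] e2 e3 e1[symmetric]
    by (simp add: algebra_simps)
  show ?thesis
    apply (rule DERIV_cong[OF dH])
    apply (subst H_alg[OF rho ode'])
    unfolding eN A_def H1_def using e1 by (simp add: t_def[symmetric] algebra_simps)
qed




lemma tangent_ineq:
  assumes "convex_on {0<..} g" "\<And>v. v > 0 \<Longrightarrow> (g has_real_derivative g' v) (at v)" "u > 0" "v > 0"
  shows "g u \<ge> g v + g' v * (u - v)"
proof -
  have "g u - g v \<ge> g' v * (u - v)"
    by (rule convex_on_imp_above_tangent[of "{0<..}"])
       (use assms in \<open>auto intro: has_field_derivative_at_within simp: interior_open\<close>)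
  thus ?thesis by simp
qed

lemma strict_imp_convex: "strictly_convex_on {0<..} g \<Longrightarrow> convex_on {0<..} g"
  unfolding strictly_convex_on_def
proof (intro convex_onI)
  fix t x y :: real
  assume H: "\<forall>x\<in>{0<..}. \<forall>y\<in>{0<..}. x \<noteq> y \<longrightarrow> (\<forall>t. 0 < t \<and> t < 1 \<longrightarrow> g ((1 - t) * x + t * y) < (1 - t) * g x + t * g y)"
    and t: "0 < t" "t < 1" and xy: "x \<in> {0<..}" "y \<in> {0<..}"
  show "g ((1 - t) *\<^sub>R x + t *\<^sub>R y) \<le> (1 - t) * g x + t * g y"
  proof (cases "x = y")
    case True thus ?thesis by (simp add: algebra_simps)
  next
    case False thus ?thesis using H xy t by (auto intro: less_imp_le)
  qed
qed (simp add: convex_real_interval)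

lemma small_dx:
  fixes r x :: "real \<Rightarrow> real"
  assumes d0: "d0 > 0" and c: "c > 0"
  and dr: "\<And>\<rho>. 0 < \<rho> \<Longrightarrow> \<rho> \<le> d0 \<Longrightarrow> (r has_real_derivative x \<rho>) (at \<rho>)"
  and rpos: "\<And>\<rho>. 0 < \<rho> \<Longrightarrow> \<rho> \<le> d0 \<Longrightarrow> r \<rho> > 0"
  shows "\<exists>\<delta>. 0 < \<delta> \<and> \<delta> < d0 \<and> \<delta> * x \<delta> < c"
proof (rule ccontr)
  assume "\<not> ?thesis"
  hence big: "\<And>\<delta>. 0 < \<delta> \<Longrightarrow> \<delta> < d0 \<Longrightarrow> \<delta> * x \<delta> \<ge> c" by (meson not_less)
  define d1 where "d1 = d0/2"
  have d1: "0 < d1" "d1 < d0" using d0 by (auto simp: d1_def)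
  define \<delta> where "\<delta> = d1 * exp (- (r d1)/c - 1)"
  have "r d1 / c > 0" using rpos[of d1] d1 c by simp
  hence "exp (- (r d1)/c - 1) < 1" by simp
  hence dl: "0 < \<delta>" "\<delta> < d1" using d1 by (auto simp: \<delta>_def)
  have "(\<lambda>s. r s - c * ln s) \<delta> \<le> (\<lambda>s. r s - c * ln s) d1"
  proof (rule DERIV_nonneg_imp_increasing_open[of \<delta> d1 "\<lambda>s. r s - c * ln s"])
    show "\<delta> \<le> d1" using dl by simp
    fix s assume s: "\<delta> < s" "s < d1"
    have sp: "s > 0" using s dl by simp
    have "DERIV (\<lambda>s. r s - c * ln s) s :> x s - c * (1/s)"
      by (rule DERIV_diff[OF dr DERIV_cmult[OF DERIV_ln_divide]]) (use s dl d1 in auto)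
    moreover have "x s - c * (1/s) \<ge> 0"
    proof -
      have "s * x s \<ge> c" using big[of s] s d1 dl by simp
      hence "x s \<ge> c / s" using sp by (simp add: field_simps)
      thus ?thesis by simp
    qed
    ultimately show "\<exists>y. DERIV (\<lambda>s. r s - c * ln s) s :> y \<and> 0 \<le> y" by blast
  next
    have "\<And>s. \<delta> \<le> s \<Longrightarrow> s \<le> d1 \<Longrightarrow> \<exists>y. DERIV (\<lambda>s. r s - c * ln s) s :> y"
      using DERIV_diff[OF dr DERIV_cmult[OF DERIV_ln_divide]] dl d1 by (meson less_le_trans le_less_trans less_imp_le)
    thus "continuous_on {\<delta>..d1} (\<lambda>s. r s - c * ln s)"
      by (rule DERIV_atLeastAtMost_imp_continuous_on)
  qed
  hence "r \<delta> \<le> r d1 + c * (ln \<delta> - ln d1)" by (simp add: algebra_simps)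
  also have "ln \<delta> = ln d1 + (- (r d1)/c - 1)" using d1 by (simp add: \<delta>_def ln_mult)
  finally have "r \<delta> \<le> - c" using c by (simp add: field_simps)
  thus False using rpos[of \<delta>] dl d1 c by simp
qed




lemma flat_main:
  fixes n :: nat and r x xx \<phi> \<phi>' \<phi>'' h h' h'' :: "real \<Rightarrow> real" and rh rz a :: real
  assumes n2: "n \<ge> 2" and r1pos: "rh > 0"
  and dr: "\<And>\<rho>. 0 < \<rho> \<Longrightarrow> \<rho> \<le> rh \<Longrightarrow> (r has_real_derivative x \<rho>) (at \<rho>)"
  and dx: "\<And>\<rho>. 0 < \<rho> \<Longrightarrow> \<rho> \<le> rh \<Longrightarrow> (x has_real_derivative xx \<rho>) (at \<rho>)"
  and xpos: "\<And>\<rho>. 0 < \<rho> \<Longrightarrow> \<rho> \<le> rh \<Longrightarrow> x \<rho> > 0"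
  and rpos: "\<And>\<rho>. 0 < \<rho> \<Longrightarrow> \<rho> \<le> rh \<Longrightarrow> r \<rho> > 0"
  and rzlim: "(r \<longlongrightarrow> rz) (at_right 0)" and rzpos: "rz > 0"
  and ode: "\<And>\<rho>. 0 < \<rho> \<Longrightarrow> \<rho> \<le> rh \<Longrightarrow> \<rho>*(\<phi>''(x \<rho>) + h''(x \<rho>*(r \<rho>/\<rho>)^(n-1))*(r \<rho>/\<rho>)^(2*(n-1)))*xx \<rho>
     = real(n-1)*(\<phi>'(r \<rho>/\<rho>) - \<phi>'(x \<rho>))
       - real(n-1)*(x \<rho> - r \<rho>/\<rho>)*h''(x \<rho>*(r \<rho>/\<rho>)^(n-1))*x \<rho>*(r \<rho>/\<rho>)^(2*n-3)"
  and T0: "((\<lambda>\<rho>. (r \<rho>/\<rho>)^(n-1) * (\<phi>'(x \<rho>) + h'(x \<rho>*(r \<rho>/\<rho>)^(n-1))*(r \<rho>/\<rho>)^(n-1))) \<longlongrightarrow> 0) (at_right 0)"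
  and d\<phi>: "\<And>v. v > 0 \<Longrightarrow> (\<phi> has_real_derivative \<phi>' v) (at v)"
  and d\<phi>': "\<And>v. v > 0 \<Longrightarrow> (\<phi>' has_real_derivative \<phi>'' v) (at v)"
  and dh: "\<And>v. v > 0 \<Longrightarrow> (h has_real_derivative h' v) (at v)"
  and dh': "\<And>v. v > 0 \<Longrightarrow> (h' has_real_derivative h'' v) (at v)"
  and \<phi>conv: "convex_on {0<..} \<phi>" and hconv: "convex_on {0<..} h"
  and \<phi>pos: "\<And>v. v > 0 \<Longrightarrow> \<phi> v > 0"
  and apos: "a > 0" and adef: "a = (r rh ^ n - rz ^ n) / rh ^ n"
  shows "h a \<le> h ((r rh / rh) ^ n)"
proof -
  define \<tau>1 where "\<tau>1 = r rh / rh"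
  have t1pos: "\<tau>1 > 0" using rpos[of rh] r1pos by (simp add: \<tau>1_def)
  define S where "S = (\<lambda>\<rho>. \<phi>' (x \<rho>) + h' (x \<rho> * (r \<rho>/\<rho>)^(n-1)) * (r \<rho>/\<rho>)^(n-1))"
  define W where "W = (\<lambda>\<rho>. \<phi> (x \<rho>) + real (n-1) * \<phi> (r \<rho>/\<rho>) + h (x \<rho> * (r \<rho>/\<rho>)^(n-1)))"
  define H where "H = (\<lambda>\<rho>. \<phi> (x \<rho>) + real (n-1) * \<phi> (r \<rho>/\<rho>) + h (x \<rho> * (r \<rho>/\<rho>)^(n-1))
            - (x \<rho> - r \<rho>/\<rho>) * (\<phi>' (x \<rho>) + h' (x \<rho> * (r \<rho>/\<rho>)^(n-1)) * (r \<rho>/\<rho>)^(n-1)))"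
  have HWS: "\<And>\<rho>. H \<rho> = W \<rho> - (x \<rho> - r \<rho>/\<rho>) * S \<rho>" by (simp add: H_def W_def S_def)
  define C0 where "C0 = real n * \<phi> \<tau>1 - real n * \<tau>1 * \<phi>' \<tau>1 + h a - a * h' a"
  define \<Lambda> where "\<Lambda> = (\<lambda>\<rho>. C0 * \<rho>^n + (real n * \<phi>' \<tau>1) * (\<rho>^(n-1) * r \<rho>) + h' a * (r \<rho>)^n)"
  define G where "G = (\<lambda>\<rho>. \<rho>^n * H \<rho> - \<Lambda> \<rho>)"
  have nm1: "n - Suc 0 = n - 1" by simp
  have nm2: "n - 1 - Suc 0 = n - 2" by simp
  have dG: "\<exists>y. DERIV G \<rho> :> y \<and> y \<ge> 0" if rho: "0 < \<rho>" "\<rho> \<le> rh" for \<rho>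
  proof -
    have dH: "DERIV H \<rho> :> real n * (x \<rho> - r \<rho>/\<rho>) * S \<rho> / \<rho>"
      unfolding H_def S_def
      by (rule H_deriv[where n=n and r=r and x=x and \<phi>=\<phi> and \<phi>'=\<phi>' and \<phi>''=\<phi>'' and h=h and h'=h' and h''=h'' and \<rho>=\<rho>, of xx, OF n2 rho(1) dr[OF rho] dx[OF rho] xpos[OF rho] rpos[OF rho] ode[OF rho] d\<phi> d\<phi>' dh dh'])
    have p1: "DERIV (\<lambda>\<rho>. \<rho>^n) \<rho> :> real n * \<rho>^(n-1)" using DERIV_pow[of n \<rho>] unfolding nm1 .
    have p2: "DERIV (\<lambda>\<rho>. \<rho>^(n-1)) \<rho> :> real (n-1) * \<rho>^(n-2)" using DERIV_pow[of "n-1" \<rho>] unfolding nm2 .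
    have p3: "DERIV (\<lambda>\<rho>. r \<rho>^n) \<rho> :> real n * (x \<rho> * r \<rho>^(n-1))" using DERIV_power[OF dr[OF rho], of n] unfolding nm1 .
    have dL: "DERIV \<Lambda> \<rho> :> C0 * (real n * \<rho>^(n-1)) + (real n * \<phi>' \<tau>1) * (\<rho>^(n-1) * x \<rho> + real (n-1) * \<rho>^(n-2) * r \<rho>)
                + h' a * (real n * (x \<rho> * r \<rho>^(n-1)))"
      unfolding \<Lambda>_def
      by (rule DERIV_add[OF DERIV_add[OF DERIV_cmult[OF p1] DERIV_cmult[OF DERIV_mult'[OF p2 dr[OF rho]]]] DERIV_cmult[OF p3]])
    have dG: "DERIV G \<rho> :> (\<rho>^n * (real n * (x \<rho> - r \<rho>/\<rho>) * S \<rho> / \<rho>) + real n * \<rho>^(n-1) * H \<rho>)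
        - (C0 * (real n * \<rho>^(n-1)) + (real n * \<phi>' \<tau>1) * (\<rho>^(n-1) * x \<rho> + real (n-1) * \<rho>^(n-2) * r \<rho>)
                + h' a * (real n * (x \<rho> * r \<rho>^(n-1))))"
      unfolding G_def by (rule DERIV_diff[OF DERIV_mult'[OF p1 dH] dL])
    define t where "t = r \<rho> / \<rho>"
    define D where "D = x \<rho> * t^(n-1)"
    have tpos: "t > 0" using rpos[OF rho] rho by (simp add: t_def)
    have Dpos: "D > 0" using xpos[OF rho] tpos by (simp add: D_def)
    define L where "L = real n * \<phi> \<tau>1 + \<phi>' \<tau>1 * (x \<rho> + real (n-1) * t - real n * \<tau>1) + h a + h' a * (D - a)"
    have WL: "W \<rho> \<ge> L"
    proof -
      have i1: "\<phi> (x \<rho>) \<ge> \<phi> \<tau>1 + \<phi>' \<tau>1 * (x \<rho> - \<tau>1)" by (rule tangent_ineq[OF \<phi>conv d\<phi> xpos[OF rho] t1pos])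
      have i2: "\<phi> t \<ge> \<phi> \<tau>1 + \<phi>' \<tau>1 * (t - \<tau>1)" by (rule tangent_ineq[OF \<phi>conv d\<phi> tpos t1pos])
      have i3: "h D \<ge> h a + h' a * (D - a)" by (rule tangent_ineq[OF hconv dh Dpos apos])
      have i2': "real (n-1) * \<phi> t \<ge> real (n-1) * (\<phi> \<tau>1 + \<phi>' \<tau>1 * (t - \<tau>1))"
        using i2 by (simp add: mult_left_mono)
      have nr: "real n = real (n-1) + 1" using n2 by simp
      have W': "W \<rho> = \<phi> (x \<rho>) + real (n-1) * \<phi> t + h D" by (simp add: W_def t_def D_def)
      have L': "L = (\<phi> \<tau>1 + \<phi>' \<tau>1 * (x \<rho> - \<tau>1)) + real (n-1) * (\<phi> \<tau>1 + \<phi>' \<tau>1 * (t - \<tau>1)) + (h a + h' a * (D - a))"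
        unfolding L_def nr by (simp add: algebra_simps)
      show ?thesis unfolding W' L' using i1 i2' i3 by linarith
    qed
    have eq: "(\<rho>^n * (real n * (x \<rho> - r \<rho>/\<rho>) * S \<rho> / \<rho>) + real n * \<rho>^(n-1) * H \<rho>)
        - (C0 * (real n * \<rho>^(n-1)) + (real n * \<phi>' \<tau>1) * (\<rho>^(n-1) * x \<rho> + real (n-1) * \<rho>^(n-2) * r \<rho>)
                + h' a * (real n * (x \<rho> * r \<rho>^(n-1))))
       = real n * \<rho>^(n-1) * (W \<rho> - L)"
    proof -
      define u where "u = \<rho>^(n-2)"
      have upos: "u > 0" using rho by (simp add: u_def)
      have u1: "\<rho>^(n-1) = u * \<rho>" unfolding u_def using n2
        using pow_m1[OF n2, of \<rho>] by simp
      have u2: "\<rho>^n = u * \<rho> * \<rho>" unfolding u_def using n2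
        using pow_n[of n \<rho>] pow_m1[OF n2, of \<rho>] n2 by simp
      have tD: "\<rho>^(n-1) * D = x \<rho> * r \<rho>^(n-1)" unfolding D_def t_def using rho
        by (simp add: power_divide)
      have rt: "r \<rho> = t * \<rho>" using rho by (simp add: t_def)
      have nr: "real n = real (n-1) + 1" using n2 by simp
      have tD': "u * \<rho> * D = x \<rho> * r \<rho>^(n-1)" using tD u1 by simp
      have E: "(u*\<rho>*\<rho> * ((real (n-1)+1)*(x \<rho> - r \<rho>/\<rho>)*S \<rho>/\<rho>) + (real (n-1)+1)*(u*\<rho>)*(W \<rho> - (x \<rho> - r \<rho>/\<rho>)*S \<rho>))
        - (((real (n-1)+1)*\<phi> \<tau>1 - (real (n-1)+1)*\<tau>1*\<phi>' \<tau>1 + h a - a*h' a) * ((real (n-1)+1)*(u*\<rho>)) + ((real (n-1)+1)*\<phi>' \<tau>1)*((u*\<rho>)*x \<rho> + real (n-1)*u*r \<rho>) + h' a*((real (n-1)+1)*(x \<rho>*r \<rho>^(n-1))))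
       = (real (n-1)+1)*(u*\<rho>)*(W \<rho> - ((real (n-1)+1)*\<phi> \<tau>1 + \<phi>' \<tau>1*(x \<rho> + real (n-1)*t - (real (n-1)+1)*\<tau>1) + h a + h' a*(D - a)))"
        by (rule eq_alg[OF rho(1) rt tD'])
      show ?thesis
        using E unfolding HWS L_def C0_def u2 u1 u_def[symmetric] nr .
    qed
    have "real n * \<rho>^(n-1) * (W \<rho> - L) \<ge> 0" using WL rho by simp
    thus ?thesis using dG eq by auto
  qed
  have mono: "G \<delta> \<le> G rh" if d: "0 < \<delta>" "\<delta> \<le> rh" for \<delta>
  proof (rule DERIV_nonneg_imp_increasing_open[OF d(2)])
    show "\<And>s. \<delta> < s \<Longrightarrow> s < rh \<Longrightarrow> \<exists>y. DERIV G s :> y \<and> 0 \<le> y" using dG d by auto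
    show "continuous_on {\<delta>..rh} G"
      by (rule DERIV_atLeastAtMost_imp_continuous_on) (use dG d in \<open>meson less_le_trans\<close>)
  qed

  have r1n: "rh^n > 0" using r1pos by simp
  have G1: "G rh = rh^n * H rh - rh^n*(real n*\<phi> \<tau>1 + h a) - h' a * rz^n"
  proof -
    have "a*rh^n = r rh^n - rz^n" using adef r1n r1pos by simp
    hence e: "r rh^n = a*rh^n + rz^n" by simp
    have e2: "rh^(n-1)*r rh = \<tau>1*rh^n" using r1pos n2 unfolding \<tau>1_def
      by (simp add: field_simps power_eq_if)
    show ?thesis unfolding G_def \<Lambda>_def C0_def e e2 by (simp add: algebra_simps)
  qed
  have ev: "eventually (\<lambda>\<delta>. 0 < \<delta> \<and> \<delta> \<le> rh) (at_right 0)"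
    unfolding eventually_at_right_field using r1pos by (auto intro!: exI[of _ rh])
  define Tf where "Tf = (\<lambda>\<rho>. (r \<rho>/\<rho>)^(n-1) * (\<phi>'(x \<rho>) + h'(x \<rho>*(r \<rho>/\<rho>)^(n-1))*(r \<rho>/\<rho>)^(n-1)))"
  have z: "((\<lambda>\<delta>::real. \<delta>^k) \<longlongrightarrow> 0) (at_right 0)" if "k > 0" for k
  proof -
    have "((\<lambda>\<delta>::real. \<delta>^k) \<longlongrightarrow> 0^k) (at_right 0)" by (intro tendsto_intros)
    thus ?thesis using that by simp
  qed
  have rzne: "rz^(n-1) \<noteq> 0" using rzpos by simp
  have S1: "((\<lambda>\<delta>. \<delta>^(n-1) * S \<delta>) \<longlongrightarrow> 0) (at_right 0)"
  proof -
    have "((\<lambda>\<delta>. \<delta>^(2*(n-1)) * Tf \<delta> / r \<delta>^(n-1)) \<longlongrightarrow> 0 * 0 / rz^(n-1)) (at_right 0)"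
      by (intro tendsto_intros z rzne rzlim) (use n2 T0 in \<open>auto simp: Tf_def\<close>)
    hence l: "((\<lambda>\<delta>. \<delta>^(2*(n-1)) * Tf \<delta> / r \<delta>^(n-1)) \<longlongrightarrow> 0) (at_right 0)" by simp
    have "eventually (\<lambda>\<delta>. \<delta>^(2*(n-1)) * Tf \<delta> / r \<delta>^(n-1) = \<delta>^(n-1) * S \<delta>) (at_right 0)"
      using ev
    proof eventually_elim
      case (elim \<delta>)
      hence "r \<delta> > 0" using rpos by auto
      thus ?case using elim unfolding Tf_def S_def
        by (simp add: power_divide power_mult power2_eq_square field_simps)
    qed
    thus ?thesis using l tendsto_cong by fastforce
  qed
  have S2: "((\<lambda>\<delta>. \<delta>^(n-1) * r \<delta> * S \<delta>) \<longlongrightarrow> 0) (at_right 0)"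
  proof -
    have "((\<lambda>\<delta>. r \<delta> * (\<delta>^(n-1) * S \<delta>)) \<longlongrightarrow> rz * 0) (at_right 0)"
      by (intro tendsto_intros rzlim S1)
    thus ?thesis by (simp add: ac_simps)
  qed
  define A where "A = (\<lambda>\<delta>. \<delta>^n*(h 1 - h' 1) + \<delta>^(n-1)*r \<delta>*S \<delta> - \<Lambda> \<delta>)"
  define B where "B = (\<lambda>\<delta>. h' 1 * r \<delta>^(n-1) - \<delta>^(n-1)*S \<delta>)"
  have Alim: "(A \<longlongrightarrow> - (h' a * rz^n)) (at_right 0)"
  proof -
    have "(A \<longlongrightarrow> 0*(h 1 - h' 1) + 0 - (C0 * 0 + (real n * \<phi>' \<tau>1) * (0 * rz) + h' a * rz^n)) (at_right 0)"
      unfolding A_def \<Lambda>_def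
      by (intro tendsto_intros z S2 rzlim) (use n2 in auto)
    thus ?thesis by simp
  qed
  have Blim: "(B \<longlongrightarrow> h' 1 * rz^(n-1) - 0) (at_right 0)"
    unfolding B_def by (intro tendsto_intros S1 rzlim)
  have lowG: "G \<delta> \<ge> A \<delta> + (\<delta> * x \<delta>) * B \<delta>" if d: "0 < \<delta>" "\<delta> \<le> rh" for \<delta>
  proof -
    define D where "D = x \<delta> * (r \<delta>/\<delta>)^(n-1)"
    have Dpos: "D > 0" using xpos[OF d] rpos[OF d] d by (simp add: D_def)
    have hD: "h D \<ge> h 1 + h' 1 * (D - 1)" by (rule tangent_ineq[OF hconv dh Dpos]) auto
    have "\<phi> (x \<delta>) > 0" using \<phi>pos xpos[OF d] by simp
    moreover have "real (n-1) * \<phi> (r \<delta>/\<delta>) \<ge> 0" using \<phi>pos[of "r \<delta>/\<delta>"] rpos[OF d] d by simp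
    ultimately have WD: "W \<delta> \<ge> h 1 + h' 1 * (D - 1)" using hD unfolding W_def D_def by simp
    define u where "u = \<delta>^(n-1)"
    have upos: "u > 0" using d by (simp add: u_def)
    have u2: "\<delta>^n = u * \<delta>" unfolding u_def using n2
      using pow_n[of n \<delta>] n2 by simp
    have Du: "D = x \<delta> * r \<delta>^(n-1) / u" unfolding D_def u_def by (simp add: power_divide)
    have "\<delta>^n * W \<delta> \<ge> \<delta>^n * (h 1 + h' 1 * (D - 1))" using WD d by (simp add: mult_left_mono)
    hence "\<delta>^n * H \<delta> \<ge> \<delta>^n * (h 1 + h' 1 * (D - 1)) - \<delta>^n*((x \<delta> - r \<delta>/\<delta>) * S \<delta>)"
      unfolding HWS by (simp add: algebra_simps)
    moreover have "\<delta>^n * (h 1 + h' 1 * (D - 1)) - \<delta>^n*((x \<delta> - r \<delta>/\<delta>) * S \<delta>)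
       = \<delta>^n*(h 1 - h' 1) + \<delta>^(n-1)*r \<delta>*S \<delta> + (\<delta> * x \<delta>) * B \<delta>"
      unfolding B_def u_def[symmetric] u2 Du using upos d by (simp add: field_simps)
    ultimately show ?thesis unfolding G_def A_def by linarith
  qed
  have key: "G rh \<ge> - (h' a * rz^n)"
  proof (rule ccontr)
    assume neg: "\<not> G rh \<ge> - (h' a * rz^n)"
    define \<eta> where "\<eta> = - (h' a * rz^n) - G rh"
    have eta: "\<eta> > 0" using neg by (simp add: \<eta>_def)
    define M where "M = \<bar>h' 1 * rz^(n-1)\<bar> + 1"
    have Mpos: "M > 0" by (simp add: M_def add_pos_nonneg)
    have e1: "eventually (\<lambda>\<delta>. dist (B \<delta>) (h' 1 * rz^(n-1) - 0) < 1) (at_right 0)"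
      using tendstoD[OF Blim] by simp
    have e2: "eventually (\<lambda>\<delta>. dist (A \<delta>) (- (h' a * rz^n)) < \<eta>/2) (at_right 0)"
      by (rule tendstoD[OF Alim]) (use eta in simp)
    have "eventually (\<lambda>\<delta>. (0 < \<delta> \<and> \<delta> \<le> rh) \<and> dist (B \<delta>) (h' 1 * rz^(n-1) - 0) < 1 \<and> dist (A \<delta>) (- (h' a * rz^n)) < \<eta>/2) (at_right 0)"
      using eventually_conj[OF ev eventually_conj[OF e1 e2]] by simp
    then obtain b where b: "b > 0" and bP: "\<And>\<delta>. 0 < \<delta> \<Longrightarrow> \<delta> < b \<Longrightarrow> (0 < \<delta> \<and> \<delta> \<le> rh) \<and> dist (B \<delta>) (h' 1 * rz^(n-1) - 0) < 1 \<and> dist (A \<delta>) (- (h' a * rz^n)) < \<eta>/2"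
      unfolding eventually_at_right_field by auto
    obtain \<delta> where dl: "0 < \<delta>" "\<delta> < min b rh" "\<delta> * x \<delta> < \<eta>/(2*M)"
      using small_dx[of "min b rh" "\<eta>/(2*M)" r x] b r1pos eta Mpos dr rpos by auto
    have P: "dist (B \<delta>) (h' 1 * rz^(n-1) - 0) < 1" "dist (A \<delta>) (- (h' a * rz^n)) < \<eta>/2" "\<delta> \<le> rh"
      using bP[of \<delta>] dl by auto
    have Bb: "\<bar>B \<delta>\<bar> \<le> M" using P(1) unfolding M_def dist_real_def by linarith
    have Ab: "A \<delta> > - (h' a * rz^n) - \<eta>/2" using P(2) unfolding dist_real_def by linarith
    have xp: "\<delta> * x \<delta> > 0" using xpos[of \<delta>] dl P(3) by simp
    have "(\<delta> * x \<delta>) * B \<delta> \<ge> - ((\<delta> * x \<delta>) * M)"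
    proof -
      have "- B \<delta> \<le> M" using Bb by linarith
      hence "(\<delta> * x \<delta>) * (- B \<delta>) \<le> (\<delta> * x \<delta>) * M" using xp by (intro mult_left_mono) auto
      thus ?thesis by simp
    qed
    moreover have "(\<delta> * x \<delta>) * M < \<eta>/2" using dl(3) Mpos by (simp add: field_simps)
    ultimately have "G \<delta> > - (h' a * rz^n) - \<eta>" using lowG[of \<delta>] dl P(3) Ab by linarith
    moreover have "G \<delta> \<le> G rh" using mono[of \<delta>] dl P(3) by simp
    ultimately show False unfolding \<eta>_def by simp
  qed
  have low: "H rh \<ge> real n*\<phi> \<tau>1 + h a"
  proof -
    have "rh^n * H rh \<ge> rh^n*(real n*\<phi> \<tau>1 + h a)" using key G1 by simp
    thus ?thesis using r1n by simp
  qed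
  have up: "H rh \<le> real n*\<phi> \<tau>1 + h (\<tau>1^n)"
  proof -
    have x1: "x rh > 0" using xpos r1pos by simp
    define D1 where "D1 = x rh * \<tau>1^(n-1)"
    have D1p: "D1 > 0" using x1 t1pos by (simp add: D1_def)
    have i1: "\<phi> \<tau>1 \<ge> \<phi> (x rh) + \<phi>' (x rh) * (\<tau>1 - x rh)" by (rule tangent_ineq[OF \<phi>conv d\<phi> t1pos x1])
    have tnp: "\<tau>1^n > 0" using t1pos by (rule zero_less_power)
    have i2: "h (\<tau>1^n) \<ge> h D1 + h' D1 * (\<tau>1^n - D1)" by (rule tangent_ineq[OF hconv dh tnp D1p])
    have tn: "\<tau>1^n = \<tau>1^(n-1) * \<tau>1" using n2
      using pow_n[of n \<tau>1] n2 by simp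
    have nr: "real n = real (n-1) + 1" using n2 by simp
    have H1': "H rh = \<phi> (x rh) + real(n-1)*\<phi> \<tau>1 + h D1 - (x rh - \<tau>1)*(\<phi>'(x rh) + h' D1 * \<tau>1^(n-1))"
      by (simp add: H_def \<tau>1_def D1_def)
    have dd: "\<tau>1^n - D1 = \<tau>1^(n-1)*(\<tau>1 - x rh)" unfolding tn D1_def by (simp add: algebra_simps)
    have "real n*\<phi> \<tau>1 + h (\<tau>1^n) - H rh = (\<phi> \<tau>1 - (\<phi> (x rh) + \<phi>' (x rh) * (\<tau>1 - x rh))) + (h (\<tau>1^n) - (h D1 + h' D1 * (\<tau>1^n - D1)))"
      unfolding H1' nr dd by (simp add: algebra_simps)
    thus ?thesis using i1 i2 by linarith
  qed
  show ?thesis using low up unfolding \<tau>1_def by simp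
qed




lemma f_flat:
  fixes f f' \<kappa> :: "real \<Rightarrow> real" and \<epsilon> :: real
  assumes f_deriv: "\<And>x. x \<ge> 0 \<Longrightarrow> (f has_real_derivative f' x) (at x within {0..})"
    and f'_deriv: "\<And>x. x \<ge> 0 \<Longrightarrow> (f' has_real_derivative (- \<kappa> x * f x)) (at x within {0..})"
    and f0: "f 0 = 0" and f'0: "f' 0 = 1"
    and \<kappa>_zero: "\<And>s. 0 < s \<Longrightarrow> s < \<epsilon> \<Longrightarrow> \<kappa> s = 0"
    and s: "0 \<le> s" "s < \<epsilon>"
  shows "f s = s \<and> f' s = 1"
proof (cases "s = 0")
  case True thus ?thesis using f0 f'0 by simp
next
  case False
  hence sp: "s > 0" using s by simp
  have atd: "at y within {0..} = at y" if "y > 0" for y :: real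
    using that by (intro at_within_interior) simp
  have cf': "continuous_on {0..s} f'"
    by (rule continuous_on_subset[OF DERIV_continuous_on[of "{0..}" f' "\<lambda>x. - \<kappa> x * f x"]]) (use f'_deriv in auto)
  have cf: "continuous_on {0..s} f"
    by (rule continuous_on_subset[OF DERIV_continuous_on[of "{0..}" f f']]) (use f_deriv in auto)
  have "f' s = f' 0"
  proof (rule DERIV_isconst_end[OF sp cf'])
    fix y :: real assume y: "0 < y" "y < s"
    have "(f' has_real_derivative (- \<kappa> y * f y)) (at y)" using f'_deriv[of y] atd[of y] y by simp
    moreover have "\<kappa> y = 0" using \<kappa>_zero y s by simp
    ultimately show "DERIV f' y :> 0" by simp
  qed
  hence f's: "f' s = 1" using f'0 by simp
  have "(\<lambda>y. f y - y) s = (\<lambda>y. f y - y) 0"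
  proof (rule DERIV_isconst_end[OF sp])
    show "continuous_on {0..s} (\<lambda>y. f y - y)" using cf by (intro continuous_intros)
    fix y :: real assume y: "0 < y" "y < s"
    have "(f has_real_derivative f' y) (at y)" using f_deriv[of y] atd[of y] y by simp
    moreover have "f' y = 1"
    proof -
      have "f' y = f' 0"
      proof (rule DERIV_isconst_end[of 0 y f'])
        show "0 < y" using y by simp
        show "continuous_on {0..y} f'" by (rule continuous_on_subset[OF cf']) (use y in auto)
        fix z :: real assume z: "0 < z" "z < y"
        have "(f' has_real_derivative (- \<kappa> z * f z)) (at z)" using f'_deriv[of z] atd[of z] z by simp
        moreover have "\<kappa> z = 0" using \<kappa>_zero z y s by simp
        ultimately show "DERIV f' z :> 0" by simp
      qed
      thus ?thesis using f'0 by simp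
    qed
    ultimately show "DERIV (\<lambda>y. f y - y) y :> 0" using DERIV_diff[OF _ DERIV_ident, of f 1 y UNIV] by simp
  qed
  thus ?thesis using f0 f's by simp
qed

lemma h_decr:
  fixes h :: "real \<Rightarrow> real"
  assumes conv: "strictly_convex_on {0<..} h" and lim: "filterlim h at_top (at_right 0)"
  shows "\<exists>vs>0. vs \<le> 1 \<and> (\<forall>a c. 0 < a \<longrightarrow> a < c \<longrightarrow> c \<le> vs \<longrightarrow> h c < h a)"
proof -
  have "eventually (\<lambda>v. h 1 + 1 \<le> h v) (at_right 0)" using lim unfolding filterlim_at_top by blast
  then obtain b where b: "b > 0" and bP: "\<And>v. 0 < v \<Longrightarrow> v < b \<Longrightarrow> h 1 + 1 \<le> h v"
    unfolding eventually_at_right_field by auto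
  define vs where "vs = min (b/2) (1/2)"
  have vs: "vs > 0" "vs \<le> 1" "vs < b" "vs < 1" using b by (auto simp: vs_def)
  have "h c < h a" if ac: "0 < a" "a < c" "c \<le> vs" for a c
  proof -
    define t where "t = (c - a) / (1 - a)"
    have a1: "a < 1" using ac vs by simp
    have t: "0 < t" "t < 1" using ac a1 vs by (auto simp: t_def field_simps)
    have tt: "t * (1 - a) = c - a" using a1 unfolding t_def by simp
    have comb: "(1 - t) * a + t * 1 = c" using tt by (simp add: algebra_simps)
    have "h ((1 - t) * a + t * 1) < (1 - t) * h a + t * h 1"
      by (rule conv[unfolded strictly_convex_on_def, rule_format]) (use ac a1 t in auto)
    moreover have "h 1 < h a" using bP[of a] ac vs by simp
    hence "t * h 1 < t * h a" using t by simp
    ultimately show ?thesis unfolding comb by (simp add: algebra_simps)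
  qed
  thus ?thesis using vs by blast
qed




theorem theorem4p4:
  fixes n :: nat and \<kappa> f f' \<phi> \<phi>' \<phi>'' h h' h'' :: "real \<Rightarrow> real" and \<epsilon> :: real
  assumes n2: "n \<ge> 2"
    and \<kappa>_cont: "continuous_on {0..} \<kappa>"
    and f_deriv: "\<And>x. x \<ge> 0 \<Longrightarrow> (f has_real_derivative f' x) (at x within {0..})"
    and f'_deriv: "\<And>x. x \<ge> 0 \<Longrightarrow> (f' has_real_derivative (- \<kappa> x * f x)) (at x within {0..})"
    and f0: "f 0 = 0" and f'0: "f' 0 = 1"
    and mu: "mu_plus \<kappa> 1 \<le> 1"
    and eps: "0 < \<epsilon>" "\<epsilon> \<le> 1" and \<kappa>_zero: "\<And>s. 0 < s \<Longrightarrow> s < \<epsilon> \<Longrightarrow> \<kappa> s = 0"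
    and A1_d1: "\<And>v. v > 0 \<Longrightarrow> (h has_real_derivative h' v) (at v)"
    and A1_d2: "\<And>v. v > 0 \<Longrightarrow> (h' has_real_derivative h'' v) (at v)"
    and A1_c2: "continuous_on {0<..} h''"
    and A1_conv: "strictly_convex_on {0<..} h"
    and A2_0: "filterlim h at_top (at_right 0)"
    and A2_inf: "filterlim (\<lambda>v. h v / v) at_top at_top"
    and A4_d1: "\<And>v. v > 0 \<Longrightarrow> (\<phi> has_real_derivative \<phi>' v) (at v)"
    and A4_d2: "\<And>v. v > 0 \<Longrightarrow> (\<phi>' has_real_derivative \<phi>'' v) (at v)"
    and A4_c2: "continuous_on {0<..} \<phi>''"
    and A4_pos: "\<And>v. v > 0 \<Longrightarrow> \<phi> v > 0"
    and A4_conv: "convex_on {0<..} \<phi>"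
  shows "\<exists>lam0>0. \<forall>lam. 0 < lam \<and> lam < lam0 \<longrightarrow>
           \<not> (\<exists>r r' r'' r0. equilibrium_solution n f f' \<phi>' \<phi>'' h' h'' lam r r' r'' r0
                             \<and> cavitating n f \<phi>' h' r r' r0)"
  proof -
  obtain vs where vs: "vs > 0" "vs \<le> 1" and hdec: "\<forall>a c. 0 < a \<longrightarrow> a < c \<longrightarrow> c \<le> vs \<longrightarrow> h c < h a"
    using h_decr[OF A1_conv A2_0] by blast
  define rh where "rh = \<epsilon> / 2"
  have rh: "0 < rh" "rh < \<epsilon>" "rh < 1" using eps by (auto simp: rh_def)
  have ff: "f s = s \<and> f' s = 1" if "0 \<le> s" "s < \<epsilon>" for s
    by (rule f_flat[OF f_deriv f'_deriv f0 f'0 \<kappa>_zero that])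
  have \<phi>conv: "convex_on {0<..} \<phi>" by (rule A4_conv)
  have hconv: "convex_on {0<..} h" by (rule strict_imp_convex[OF A1_conv])
  show ?thesis
  proof (intro exI[of _ "rh * vs"] conjI allI impI notI)
    show "0 < rh * vs" using rh vs by simp
    fix lam assume lam: "0 < lam \<and> lam < rh * vs"
    assume "\<exists>r r' r'' r0. equilibrium_solution n f f' \<phi>' \<phi>'' h' h'' lam r r' r'' r0 \<and> cavitating n f \<phi>' h' r r' r0"
    then obtain r r' r'' r0 where eq: "equilibrium_solution n f f' \<phi>' \<phi>'' h' h'' lam r r' r'' r0"
      and cav: "cavitating n f \<phi>' h' r r' r0" by blast
    note E = eq[unfolded equilibrium_solution_def]
    have dr1: "\<And>\<rho>. \<rho> \<in> {0<..1} \<Longrightarrow> (r has_real_derivative r' \<rho>) (at \<rho> within {0<..1})" using E by blast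
    have dx1: "\<And>\<rho>. \<rho> \<in> {0<..<1} \<Longrightarrow> (r' has_real_derivative r'' \<rho>) (at \<rho>)" using E by blast
    have xp1: "\<And>\<rho>. \<rho> \<in> {0<..1} \<Longrightarrow> r' \<rho> > 0" using E by blast
    have rlim: "(r \<longlongrightarrow> r0) (at_right 0)" using E by blast
    have r1: "r 1 = lam" using E by blast
    have ode1: "\<And>\<rho>. \<rho> \<in> {0<..<1} \<Longrightarrow>
        f \<rho> * (\<phi>'' (r' \<rho>) + h'' (r' \<rho> * tau f r \<rho> ^ (n - 1)) * tau f r \<rho> ^ (2 * (n - 1))) * r'' \<rho>
        = real (n - 1) * (f' (r \<rho>) * \<phi>' (tau f r \<rho>) - f' \<rho> * \<phi>' (r' \<rho>))
          - real (n - 1) * (f' (r \<rho>) * r' \<rho> - f' \<rho> * tau f r \<rho>)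
              * h'' (r' \<rho> * tau f r \<rho> ^ (n - 1)) * r' \<rho> * tau f r \<rho> ^ (2 * n - 3)"
      using E by blast
    have r0p: "r0 > 0" and Tlim: "(T_fun n f \<phi>' h' r r' \<longlongrightarrow> 0) (at_right 0)"
      using cav unfolding cavitating_def by auto
    have drat: "(r has_real_derivative r' \<rho>) (at \<rho>)" if "0 < \<rho>" "\<rho> < 1" for \<rho>
    proof -
      have "at \<rho> within {0<..1} = at \<rho>" using that by (intro at_within_interior) simp
      thus ?thesis using dr1[of \<rho>] that by simp
    qed
    have rcont: "continuous_on {0<..1} r" by (rule DERIV_continuous_on[OF dr1])
    have mono: "r s < r t" if st: "0 < s" "s < t" "t \<le> 1" for s t
    proof (rule DERIV_pos_imp_increasing_open[OF st(2)])
      fix y assume y: "s < y" "y < t"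
      show "\<exists>d. DERIV r y :> d \<and> 0 < d" using drat[of y] xp1[of y] y st by auto
    next
      show "continuous_on {s..t} r" by (rule continuous_on_subset[OF rcont]) (use st in auto)
    qed
    have r0lt: "r0 < r s" if s: "0 < s" "s \<le> 1" for s
    proof -
      have "r0 \<le> r (s/2)"
      proof (rule tendsto_le[of "at_right 0" "\<lambda>_. r (s/2)" "r (s/2)" r r0])
        show "at_right (0::real) \<noteq> bot" by simp
        show "((\<lambda>_. r (s/2)) \<longlongrightarrow> r (s/2)) (at_right 0)" by simp
        show "(r \<longlongrightarrow> r0) (at_right 0)" by (rule rlim)
        show "\<forall>\<^sub>F x in at_right 0. r x \<le> r (s/2)"
          unfolding eventually_at_right_field
        proof (intro exI[of _ "s/2"] conjI allI impI)
          show "0 < s/2" using s by simp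
          fix y :: real assume "0 < y" "y < s/2"
          thus "r y \<le> r (s/2)" using mono[of y "s/2"] s by simp
        qed
      qed
      also have "r (s/2) < r s" using mono[of "s/2" s] s by simp
      finally show ?thesis .
    qed
    have rpos: "r \<rho> > 0" if "0 < \<rho>" "\<rho> \<le> 1" for \<rho> using r0lt[OF that] r0p by simp
    have rlam: "r \<rho> < lam" if "0 < \<rho>" "\<rho> < 1" for \<rho> using mono[of \<rho> 1] that r1 by simp
    have lameps: "lam < \<epsilon>" using lam rh vs
      by (smt (verit) mult_left_le mult_pos_pos)
    have fvals: "f (r \<rho>) = r \<rho> \<and> f' (r \<rho>) = 1 \<and> f \<rho> = \<rho> \<and> f' \<rho> = 1 \<and> tau f r \<rho> = r \<rho> / \<rho>"
      if "0 < \<rho>" "\<rho> \<le> rh" for \<rho>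
    proof -
      have a: "f (r \<rho>) = r \<rho> \<and> f' (r \<rho>) = 1" using ff[of "r \<rho>"] rpos[of \<rho>] rlam[of \<rho>] that rh lameps by auto
      have b: "f \<rho> = \<rho> \<and> f' \<rho> = 1" using ff[of \<rho>] that rh by auto
      show ?thesis using a b by (simp add: tau_def)
    qed
    define a where "a = (r rh ^ n - r0 ^ n) / rh ^ n"
    have rhrz: "r0 < r rh" using r0lt[of rh] rh by simp
    have pw: "r0 ^ n < r rh ^ n" using rhrz r0p n2 by (intro power_strict_mono) auto
    have apos: "a > 0" using pw rh by (simp add: a_def)
    have DR: "\<And>\<rho>. 0 < \<rho> \<Longrightarrow> \<rho> \<le> rh \<Longrightarrow> (r has_real_derivative r' \<rho>) (at \<rho>)"
      using drat rh by simp
    have DX: "\<And>\<rho>. 0 < \<rho> \<Longrightarrow> \<rho> \<le> rh \<Longrightarrow> (r' has_real_derivative r'' \<rho>) (at \<rho>)"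
      using dx1 rh by simp
    have XP: "\<And>\<rho>. 0 < \<rho> \<Longrightarrow> \<rho> \<le> rh \<Longrightarrow> r' \<rho> > 0" using xp1 rh by simp
    have RP: "\<And>\<rho>. 0 < \<rho> \<Longrightarrow> \<rho> \<le> rh \<Longrightarrow> r \<rho> > 0" using rpos rh by simp
    have ODE: "\<rho>*(\<phi>''(r' \<rho>) + h''(r' \<rho>*(r \<rho>/\<rho>)^(n-1))*(r \<rho>/\<rho>)^(2*(n-1)))*r'' \<rho>
     = real(n-1)*(\<phi>'(r \<rho>/\<rho>) - \<phi>'(r' \<rho>))
       - real(n-1)*(r' \<rho> - r \<rho>/\<rho>)*h''(r' \<rho>*(r \<rho>/\<rho>)^(n-1))*r' \<rho>*(r \<rho>/\<rho>)^(2*n-3)"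
      if "0 < \<rho>" "\<rho> \<le> rh" for \<rho>
    proof -
      have fv: "f (r \<rho>) = r \<rho>" "f' (r \<rho>) = 1" "f \<rho> = \<rho>" "f' \<rho> = 1" "tau f r \<rho> = r \<rho> / \<rho>"
        using fvals[OF that] by auto
      have "\<rho> \<in> {0<..<1}" using that rh by simp
      from ode1[OF this] show ?thesis unfolding fv by simp
    qed
    have ev: "eventually (\<lambda>\<rho>. T_fun n f \<phi>' h' r r' \<rho> =
        (r \<rho>/\<rho>)^(n-1) * (\<phi>'(r' \<rho>) + h'(r' \<rho>*(r \<rho>/\<rho>)^(n-1))*(r \<rho>/\<rho>)^(n-1))) (at_right 0)"
      unfolding eventually_at_right_field
    proof (intro exI[of _ rh] conjI allI impI)
      show "0 < rh" using rh by simp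
      fix y :: real assume y: "0 < y" "y < rh"
      have "tau f r y = r y / y" using fvals[of y] y by simp
      thus "T_fun n f \<phi>' h' r r' y = (r y/y)^(n-1) * (\<phi>'(r' y) + h'(r' y*(r y/y)^(n-1))*(r y/y)^(n-1))"
        unfolding T_fun_def by simp
    qed
    have T0: "((\<lambda>\<rho>. (r \<rho>/\<rho>)^(n-1) * (\<phi>'(r' \<rho>) + h'(r' \<rho>*(r \<rho>/\<rho>)^(n-1))*(r \<rho>/\<rho>)^(n-1))) \<longlongrightarrow> 0) (at_right 0)"
      using tendsto_cong[OF ev] Tlim by simp
    have hineq: "h a \<le> h ((r rh / rh) ^ n)"
      by (rule flat_main[where n=n and r=r and x=r' and xx=r'' and \<phi>=\<phi> and \<phi>'=\<phi>' and \<phi>''=\<phi>'' and h=h and h'=h' and h''=h'' and rh=rh and rz=r0 and a=a,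
            OF n2 rh(1) DR DX XP RP rlim r0p ODE T0 A4_d1 A4_d2 A1_d1 A1_d2 \<phi>conv hconv A4_pos apos a_def])
    define q where "q = r rh / rh"
    have qpos: "q > 0" using RP[of rh] rh by (simp add: q_def)
    have qvs: "q < vs"
    proof -
      have "r rh < rh * vs" using rlam[of rh] rh lam by simp
      thus ?thesis using rh by (simp add: q_def field_simps)
    qed
    have qn: "q ^ n \<le> q" using power_decreasing[of 1 n q] n2 qpos qvs vs by simp
    have aq: "a < q ^ n"
    proof -
      have "q ^ n = r rh ^ n / rh ^ n" by (simp add: q_def power_divide)
      moreover have "(r rh ^ n - r0 ^ n) / rh ^ n < r rh ^ n / rh ^ n"
        using rh r0p by (intro divide_strict_right_mono) auto
      ultimately show ?thesis by (simp add: a_def)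
    qed
    have "h (q ^ n) < h a" using hdec apos aq qn qvs by auto
    thus False using hineq by (simp add: q_def)
  qed
qed


end
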